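(* Let $\Omega\subseteq\mathsf X$ be open, $p\in[1,\infty)$, and $\rho_\bullet=(\rho_\delta)_{\delta\in(0,1)}\subseteq\mathfrak M_+(\mathsf X\times\mathsf X)$. Suppose there is a family $(\varrho^+_\delta)_{\delta\in(0,1)}$ of Lebesgue measurable functions $(0,\infty)\to[0,+\infty]$ such that: (i) $\lim_{r\searrow0}\limsup_{\delta\searrow0}\int_{(r,+\infty)}\frac{\varrho^+_\delta(t)}{t^{p+1}}\,\mathrm dt=0$; (ii) for every $\delta\in(0,1)$, $\rho_\delta(x,x')\le\frac{\varrho^+_\delta(\mathsf d(x,x'))}{\mathfrak m(\mathrm B(x,4\mathsf d(x,x')))}$ for $(\mathfrak m\otimes\mathfrak m)$-a.e. $(x,x')\in\Omega\times\Omega$ with $x\ne x'$; (iii) there is $\bar r>0$ such that for every $\delta\in(0,1)$ and every $k\in\mathbb Z$, $\varrho^+_\delta$ is constant on $(2^k\bar r,2^{k+1}\bar r]$. Then $\rho_\bullet$ satisfies the $p$-decay condition for $\Omega$, i.e. \[ \lim_{r\searrow0}\limsup_{\delta\searrow0}\operatorname*{ess\,sup}_{x\in\Omega}\int_{\Omega\cap\{x':\mathsf d(x,x')>r\}}\frac{\rho_\delta(x,x')+\rho_\delta(x',x)}{\mathsf d(x,x')^p}\,\mathrm d\mathfrak m(x')=0. \]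
   Context: $(\mathsf X,\mathsf d)$ is a locally complete separable metric space of positive diameter with a locally finite Borel outer measure $\mathfrak m$, $\mathfrak m(\mathsf X)>0$. Conventions $0\cdot(+\infty)=0/0=0$. Closed balls $\mathrm B(x,r)=\{x':\mathsf d(x,x')\le r\}$. Essential sup w.r.t. $\mathfrak m$. $\mathfrak M_+(\mathsf X\times\mathsf X)$: $(\mathfrak m\otimes\mathfrak m)$-measurable functions into $[0,+\infty]$. *)

theory Defs
  imports "HOL-Analysis.Analysis"
begin

definition standing_mms :: "('a::{metric_space,second_countable_topology}) measure \<Rightarrow> bool" where
  "standing_mms M \<longleftrightarrow>
     sets M = sets borel \<and>
     (\<forall>x::'a. \<exists>e>0. complete (cball x e)) \<and>
     (\<exists>x y::'a. x \<noteq> y) \<and>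
     (\<forall>x::'a. \<exists>e>0. emeasure M (ball x e) < \<infinity>) \<and>
     emeasure M (space M) > 0"

definition ess_sup_on :: "'a measure \<Rightarrow> 'a set \<Rightarrow> ('a \<Rightarrow> ennreal) \<Rightarrow> ennreal" where
  "ess_sup_on M \<Omega> f = Inf {c. AE x in M. x \<in> \<Omega> \<longrightarrow> f x \<le> c}"

definition p_decay :: "('a::metric_space) measure \<Rightarrow> 'a set \<Rightarrow> real \<Rightarrow> (real \<Rightarrow> 'a \<Rightarrow> 'a \<Rightarrow> ennreal) \<Rightarrow> bool" where
  "p_decay M \<Omega> p \<rho> \<longleftrightarrow>
     ((\<lambda>r. Limsup (at_right 0) (\<lambda>\<delta>.
        ess_sup_on M \<Omega> (\<lambda>x. \<integral>\<^sup>+ x'. indicator (\<Omega> \<inter> {x'. dist x x' > r}) x' *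
            ((\<rho> \<delta> x x' + \<rho> \<delta> x' x) / ennreal (dist x x' powr p)) \<partial>(completion M))))
      \<longlongrightarrow> 0) (at_right 0)"

end

theory Submission
  imports Defs
begin

lemma ennreal_div_antimono: fixes a b c :: ennreal assumes "a \<le> b" shows "c / b \<le> c / a"
proof (cases "a = 0")
  case True then show ?thesis by (auto simp: ennreal_divide_zero)
next
  case False
  then have "b \<noteq> 0" using assms by auto
  show ?thesis using assms False \<open>b \<noteq> 0\<close>
  apply (cases a b c rule: ennreal3_cases)
  apply (auto simp: divide_ennreal ennreal_divide_top top_unique frac_le ennreal_top_divide)
  done
qed

lemma ennreal_mul_div_le: fixes a m c :: ennreal assumes "a \<le> m" shows "a * (c / m) \<le> c"
  by (metis assms dense_le divide_le_posI_ennreal ennreal_times_divide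
    le_zero_eq mult_eq_0_iff mult_right_mono not_less_iff_gr_or_eq
    not_less_zero)

lemma dyadic_scale:
  fixes r rb :: real assumes "r > 0" "rb > 0"
  shows "\<exists>k::int. r / 2 < 2 powr k * rb \<and> 2 powr k * rb \<le> r"
proof -
  define k where "k = \<lfloor>log 2 (r / rb)\<rfloor>"
  have "2 powr k \<le> 2 powr (log 2 (r/rb))" unfolding k_def by (intro powr_mono) auto
  also have "\<dots> = r / rb" using assms by simp
  finally have 1: "2 powr k * rb \<le> r" using assms by (simp add: field_simps)
  have "r / rb = 2 powr (log 2 (r/rb))" using assms by simp
  also have "\<dots> < 2 powr (k + 1)" unfolding k_def by (intro powr_less_mono) linarith+
  also have "\<dots> = 2 * 2 powr k" by (simp add: powr_add)
  finally have "r / 2 < 2 powr k * rb" using assms by (simp add: field_simps)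
  with 1 show ?thesis by blast
qed

lemma dyadic_find:
  fixes d R0 :: real assumes "R0 > 0" "d > R0"
  shows "\<exists>n. R0 * 2 ^ n < d \<and> d \<le> R0 * 2 ^ Suc n"
proof -
  obtain N where "d / R0 < 2 ^ N" using real_arch_pow[of 2 "d/R0"] by auto
  then have ex: "\<exists>N. d \<le> R0 * 2 ^ N" using assms by (auto simp: field_simps intro!: exI[of _ N])
  define N where "N = (LEAST N. d \<le> R0 * 2 ^ N)"
  have N1: "d \<le> R0 * 2 ^ N" unfolding N_def by (rule LeastI_ex[OF ex])
  have "N \<noteq> 0"
  proof
    assume "N = 0" with N1 assms show False by simp
  qed
  then obtain n where n: "N = Suc n" by (cases N) auto
  have "\<not> d \<le> R0 * 2 ^ n" using not_less_Least[of n "\<lambda>N. d \<le> R0 * 2 ^ N"] n N_def by auto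
  then show ?thesis using N1 n by (auto simp: not_le intro!: exI[of _ n])
qed

lemma ennreal_identity:
  fixes c :: ennreal and R p :: real assumes "R > 0"
  shows "(c + c) / ennreal (R powr p) = ennreal (2 powr (p+2)) * (c / ennreal ((R*2) powr (p+1)) * ennreal (R*2 - R))"
proof -
  have a: "c / ennreal a = c * ennreal (1 / a)" if "a > 0" for a :: real
    using that by (simp add: divide_ennreal_def inverse_ennreal divide_inverse)
  have r: "2 / R powr p = 2 powr (p+2) * (1 / (R*2) powr (p+1)) * (R*2 - R)"
  proof -
    have "(R*2) powr (p+1) = R powr p * R * (2 powr p * 2)" using assms
      by (simp add: powr_mult powr_add)
    moreover have "2 powr (p+2) = 2 powr p * 4" by (simp add: powr_add)
    ultimately show ?thesis using assms by (simp add: field_simps)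
  qed
  have "(c + c) / ennreal (R powr p) = c * (ennreal 2 / ennreal (R powr p))"
    by (simp add: ennreal_times_divide mult_2_right)
  also have "\<dots> = c * ennreal (2 / R powr p)"
    by (subst divide_ennreal) (use assms in auto)
  also have "\<dots> = c * (ennreal (2 powr (p+2)) * ennreal (1 / (R*2) powr (p+1)) * ennreal (R*2 - R))"
  proof -
    have "ennreal (2 powr (p+2) * (1/(R*2) powr (p+1)) * (R*2-R)) = ennreal (2 powr (p+2) * (1/(R*2) powr (p+1))) * ennreal (R*2-R)"
      by (rule ennreal_mult) (use assms in auto)
    also have "ennreal (2 powr (p+2) * (1/(R*2) powr (p+1))) = ennreal (2 powr (p+2)) * ennreal (1/(R*2) powr (p+1))"
      by (rule ennreal_mult) auto
    finally show ?thesis unfolding r by simp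
  qed
  also have "\<dots> = ennreal (2 powr (p+2)) * (c / ennreal ((R*2) powr (p+1)) * ennreal (R*2 - R))"
    using assms by (simp add: a mult_ac)
  finally show ?thesis .
qed
lemma pow_shift: "2 powr real_of_int (k + int n) * rb = 2 powr real_of_int (k::int) * rb * 2 ^ n"
proof -
  have "2 powr real_of_int (k + int n) = 2 powr real_of_int k * 2 powr real n" by (simp only: of_int_add of_int_of_nat_eq powr_add)
  also have "2 powr real n = (2::real) ^ n" by (rule powr_realpow) simp
  finally show ?thesis by simp
qed

lemma core_bound:
  fixes M :: "'a::metric_space measure" and x :: 'a and \<Omega> :: "'a set"
    and r R0 p :: real and \<rho> :: "'a \<Rightarrow> 'a \<Rightarrow> ennreal" and g :: "real \<Rightarrow> ennreal"
  assumes sM: "sets M = sets borel" and R0: "0 < R0" "R0 \<le> r" "r / 2 < R0" and p: "p \<ge> 0"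
    and const: "\<And>n t. t \<in> {R0 * 2 ^ n <.. R0 * 2 ^ Suc n} \<Longrightarrow> g t = g (R0 * 2 ^ Suc n)"
    and ae: "AE x' in M. (x' \<in> \<Omega> \<and> x \<noteq> x' \<longrightarrow> \<rho> x x' \<le> g (dist x x') / emeasure M (cball x (4 * dist x x')))
                    \<and> (x' \<in> \<Omega> \<and> x' \<noteq> x \<longrightarrow> \<rho> x' x \<le> g (dist x' x) / emeasure M (cball x' (4 * dist x' x)))"
  shows "(\<integral>\<^sup>+ x'. indicator (\<Omega> \<inter> {x'. dist x x' > r}) x' *
            ((\<rho> x x' + \<rho> x' x) / ennreal (dist x x' powr p)) \<partial>(completion M))
         \<le> ennreal (2 powr (p+2)) * (\<integral>\<^sup>+ t\<in>{r/2<..}. g t / ennreal (t powr (p + 1)) \<partial>lebesgue)"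
proof -
  define J where "J n = {R0 * 2 ^ n <.. R0 * 2 ^ Suc n}" for n :: nat
  define A where "A n = {x'. dist x x' \<in> J n}" for n
  define c where "c n = g (R0 * 2 ^ Suc n)" for n
  define B where "B n = emeasure M (cball x (R0 * 2 ^ Suc n))" for n
  define b where "b n = (c n / B n + c n / B n) / ennreal ((R0 * 2 ^ n) powr p)" for n
  define e where "e n = c n / ennreal ((R0 * 2 ^ Suc n) powr (p + 1))" for n
  define K where "K = ennreal (2 powr (p+2))"
  have cball_sets: "cball y s \<in> sets M" for y s using sM by simp
  have A_sets: "A n \<in> sets M" for n
  proof -
    have "A n = dist x -` J n \<inter> space borel" unfolding A_def by auto
    also have "\<dots> \<in> sets borel"
      by (rule measurable_sets[of _ borel borel]) (auto simp: J_def intro!: borel_measurable_continuous_onI continuous_on_dist continuous_on_const continuous_on_id)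
    finally show ?thesis using sM by simp
  qed
  have step1: "AE x' in M. indicator (\<Omega> \<inter> {x'. dist x x' > r}) x' *
            ((\<rho> x x' + \<rho> x' x) / ennreal (dist x x' powr p)) \<le> (\<Sum>n. b n * indicator (A n) x')"
    using ae
  proof eventually_elim
    case (elim x')
    show ?case
    proof (cases "x' \<in> \<Omega> \<and> dist x x' > r")
      case False then show ?thesis by (auto simp: indicator_def)
    next
      case True
      define d where "d = dist x x'"
      have d: "d > r" "d > R0" using True R0 by (auto simp: d_def)
      have "x \<noteq> x'" using d R0 by (auto simp: d_def)
      obtain n where n: "R0 * 2 ^ n < d" "d \<le> R0 * 2 ^ Suc n" using dyadic_find[OF R0(1) d(2)] by blast
      have gd: "g d = c n" unfolding c_def by (rule const) (use n in auto)
      have "B n \<le> emeasure M (cball x (4 * d))"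
        unfolding B_def using n R0 by (intro emeasure_mono cball_sets) (auto simp: subset_iff)
      then have 1: "\<rho> x x' \<le> c n / B n"
        using elim True \<open>x \<noteq> x'\<close> gd ennreal_div_antimono order_trans unfolding d_def by metis
      have "cball x (R0 * 2 ^ Suc n) \<subseteq> cball x' (4 * d)"
      proof
        fix y assume "y \<in> cball x (R0 * 2 ^ Suc n)"
        then have "dist x y \<le> 2 * d" using n by auto
        then have "dist x' y \<le> 3 * d" using dist_triangle[of x' y x] by (simp add: dist_commute d_def)
        then show "y \<in> cball x' (4 * d)" using d R0 by auto
      qed
      then have "B n \<le> emeasure M (cball x' (4 * d))"
        unfolding B_def by (intro emeasure_mono cball_sets)
      then have 2: "\<rho> x' x \<le> c n / B n"
        using elim True \<open>x \<noteq> x'\<close> gd ennreal_div_antimono order_trans unfolding d_def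
        by (metis dist_commute)
      have "(\<rho> x x' + \<rho> x' x) / ennreal (d powr p) \<le> (c n / B n + c n / B n) / ennreal (d powr p)"
        using 1 2 by (intro divide_right_mono_ennreal add_mono)
      also have "\<dots> \<le> b n" unfolding b_def
        using n R0 p by (intro ennreal_div_antimono ennreal_leI powr_mono2) auto
      also have "\<dots> = b n * indicator (A n) x'"
        using n by (simp add: A_def J_def d_def)
      also have "\<dots> \<le> (\<Sum>n. b n * indicator (A n) x')"
      proof -
        have "(\<Sum>i\<in>{n}. b i * indicator (A i) x') \<le> (\<Sum>i. b i * indicator (A i) x')"
          by (rule sum_le_suminf) (auto intro: summableI)
        then show ?thesis by (metis sum.insert_remove finite.emptyI sum.empty empty_Diff add_0_right)
      qed
      finally show ?thesis using True by (simp add: d_def)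
    qed
  qed
  have "(\<integral>\<^sup>+ x'. indicator (\<Omega> \<inter> {x'. dist x x' > r}) x' *
            ((\<rho> x x' + \<rho> x' x) / ennreal (dist x x' powr p)) \<partial>(completion M))
        \<le> (\<integral>\<^sup>+ x'. (\<Sum>n. b n * indicator (A n) x') \<partial>(completion M))"
    by (rule nn_integral_mono_AE) (rule AE_completion[OF step1])
  also have "\<dots> = (\<integral>\<^sup>+ x'. (\<Sum>n. b n * indicator (A n) x') \<partial>M)"
    by (rule nn_integral_completion)
  also have "\<dots> = (\<Sum>n. b n * emeasure M (A n))"
  proof -
    have "(\<lambda>x'. b i * indicator (A i) x') \<in> borel_measurable M" for i
      using A_sets[of i] by measurable
    then show ?thesis
      by (subst nn_integral_suminf) (auto simp: nn_integral_cmult_indicator[OF A_sets])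
  qed
  also have "\<dots> \<le> (\<Sum>n. K * (e n * emeasure lborel (J n)))"
  proof (intro suminf_le summableI)
    fix n
    have AB: "emeasure M (A n) \<le> B n"
      unfolding B_def by (intro emeasure_mono cball_sets) (auto simp: A_def J_def)
    have "b n * emeasure M (A n) = (emeasure M (A n) * (c n / B n) + emeasure M (A n) * (c n / B n)) / ennreal ((R0 * 2 ^ n) powr p)"
      unfolding b_def by (simp add: ennreal_times_divide distrib_left mult.commute)
    also have "\<dots> \<le> (c n + c n) / ennreal ((R0 * 2 ^ n) powr p)"
      by (intro divide_right_mono_ennreal add_mono ennreal_mul_div_le AB)
    also have "\<dots> = K * (e n * ennreal ((R0 * 2 ^ n) * 2 - R0 * 2 ^ n))"
      unfolding K_def e_def using ennreal_identity[of "R0 * 2 ^ n" "c n" p] R0 by (simp add: mult_ac)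
    also have "\<dots> = K * (e n * emeasure lborel (J n))"
      unfolding J_def using R0 by (subst emeasure_lborel_Ioc) (auto simp: mult_ac)
    finally show "b n * emeasure M (A n) \<le> K * (e n * emeasure lborel (J n))" .
  qed
  also have "\<dots> = K * (\<Sum>n. e n * emeasure lborel (J n))"
    by (rule ennreal_suminf_cmult)
  also have "(\<Sum>n. e n * emeasure lborel (J n)) = (\<integral>\<^sup>+ t. (\<Sum>n. e n * indicator (J n) t) \<partial>lborel)"
    by (subst nn_integral_suminf) (auto simp: J_def nn_integral_cmult_indicator)
  also have "\<dots> = (\<integral>\<^sup>+ t. (\<Sum>n. e n * indicator (J n) t) \<partial>lebesgue)"
    by (rule nn_integral_completion[symmetric])
  also have "\<dots> \<le> (\<integral>\<^sup>+ t\<in>{r/2<..}. g t / ennreal (t powr (p + 1)) \<partial>lebesgue)"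
  proof (rule nn_integral_mono)
    fix t :: real
    show "(\<Sum>n. e n * indicator (J n) t) \<le> g t / ennreal (t powr (p + 1)) * indicator {r/2<..} t"
    proof (cases "\<exists>n. t \<in> J n")
      case False then show ?thesis by simp
    next
      case True
      then obtain n where n: "t \<in> J n" by blast
      have uniq: "m = n" if "t \<in> J m" for m
      proof (rule ccontr)
        assume "m \<noteq> n"
        then consider "m < n" | "n < m" by linarith
        then show False
        proof cases
          case 1
          then have "R0 * (2::real) ^ Suc m \<le> R0 * 2 ^ n" using R0 by (intro mult_left_mono power_increasing) auto
          then show False using that n unfolding J_def greaterThanAtMost_iff by linarith
        next
          case 2
          then have "R0 * (2::real) ^ Suc n \<le> R0 * 2 ^ m" using R0 by (intro mult_left_mono power_increasing) auto
          then show False using that n unfolding J_def greaterThanAtMost_iff by linarith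
        qed
      qed
      have "(\<lambda>m. e m * indicator (J m) t) = (\<lambda>m. if m = n then e n else 0)"
      proof (rule ext)
        fix m show "e m * indicator (J m) t = (if m = n then e n else 0)"
          using n uniq[of m] by (cases "t \<in> J m") auto
      qed
      then have "(\<Sum>m. e m * indicator (J m) t) = e n" using sums_single[of n "\<lambda>_. e n"]
        by (simp add: sums_iff)
      also have "e n \<le> g t / ennreal (t powr (p + 1))"
        unfolding e_def c_def using n R0 p
        by (subst const[of t n]) (auto simp: J_def intro!: ennreal_div_antimono ennreal_leI powr_mono2)
      also have "\<dots> = g t / ennreal (t powr (p + 1)) * indicator {r/2<..} t"
      proof -
        have "R0 \<le> R0 * 2 ^ n" using R0 by simp
        then have "t > r / 2" using n R0 unfolding J_def greaterThanAtMost_iff by linarith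
        then show ?thesis by simp
      qed
      finally show ?thesis .
    qed
  qed
  finally show ?thesis unfolding K_def by (auto simp: mult_left_mono)
qed

theorem proposition3p14:
  fixes M :: "('a::{metric_space,second_countable_topology}) measure"
    and \<Omega> :: "'a set" and p :: real
    and \<rho> :: "real \<Rightarrow> 'a \<Rightarrow> 'a \<Rightarrow> ennreal"
    and \<rho>p :: "real \<Rightarrow> real \<Rightarrow> ennreal"
  assumes "standing_mms M"
    and "open \<Omega>"
    and "p \<ge> 1"
    and "\<forall>\<delta>\<in>{0<..<1}. (\<lambda>(x, x'). \<rho> \<delta> x x') \<in> borel_measurable (completion (M \<Otimes>\<^sub>M M))"
    and "\<forall>\<delta>\<in>{0<..<1}. \<rho>p \<delta> \<in> borel_measurable (restrict_space lebesgue {0<..})"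
    and "((\<lambda>r. Limsup (at_right 0) (\<lambda>\<delta>.
            \<integral>\<^sup>+ t\<in>{r<..}. \<rho>p \<delta> t / ennreal (t powr (p + 1)) \<partial>lebesgue)) \<longlongrightarrow> 0) (at_right 0)"
    and "\<forall>\<delta>\<in>{0<..<1}. AE z in M \<Otimes>\<^sub>M M. fst z \<in> \<Omega> \<and> snd z \<in> \<Omega> \<and> fst z \<noteq> snd z \<longrightarrow>
            \<rho> \<delta> (fst z) (snd z) \<le>
              \<rho>p \<delta> (dist (fst z) (snd z)) / emeasure M (cball (fst z) (4 * dist (fst z) (snd z)))"
    and "\<exists>rb>0. \<forall>\<delta>\<in>{0<..<1}. \<forall>k::int. \<exists>c. \<forall>t\<in>{2 powr k * rb <.. 2 powr (k + 1) * rb}. \<rho>p \<delta> t = c"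
  shows "p_decay M \<Omega> p \<rho>"
proof -
  from assms(8) obtain rb where rb: "rb > 0"
    and cst: "\<forall>\<delta>\<in>{0<..<1}. \<forall>k::int. \<exists>c. \<forall>t\<in>{2 powr k * rb <.. 2 powr (k + 1) * rb}. \<rho>p \<delta> t = c"
    by blast
  have sM: "sets M = sets borel" using assms(1) unfolding standing_mms_def by auto
  have spM: "space M = UNIV" using sets_eq_imp_space_eq[OF sM] by simp
  have sf: "sigma_finite_measure M"
  proof -
    have "\<forall>x. \<exists>e>0. emeasure M (ball x e) < \<infinity>" using assms(1) unfolding standing_mms_def by auto
    then obtain E where E: "\<And>x. E x > 0 \<and> emeasure M (ball x (E x)) < \<infinity>" by metis
    obtain F' where F': "F' \<subseteq> range (\<lambda>x. ball x (E x))" "countable F'"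
      "\<Union>F' = \<Union>(range (\<lambda>x. ball x (E x)))"
      by (rule Lindelof[of "range (\<lambda>x. ball x (E x))"]) auto
    have "\<Union>(range (\<lambda>x. ball x (E x))) = UNIV" using E by auto
    show ?thesis
    proof (rule sigma_finite_measure.intro, intro exI conjI)
      show "countable F'" by fact
      show "F' \<subseteq> sets M" using F'(1) sM by auto
      show "\<Union>F' = space M" using F'(3) \<open>\<Union>(range (\<lambda>x. ball x (E x))) = UNIV\<close> spM by simp
      show "\<forall>a\<in>F'. emeasure M a \<noteq> \<infinity>"
      proof
        fix a assume "a \<in> F'"
        then obtain y where "a = ball y (E y)" using F'(1) by auto
        then show "emeasure M a \<noteq> \<infinity>" using E[of y] by auto
      qed
    qed
  qed
  have PS: "pair_sigma_finite M M" using sf by (simp add: pair_sigma_finite_def)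
  define Q where "Q \<delta> x x' \<longleftrightarrow> (x \<in> \<Omega> \<and> x' \<in> \<Omega> \<and> x \<noteq> x' \<longrightarrow>
      \<rho> \<delta> x x' \<le> \<rho>p \<delta> (dist x x') / emeasure M (cball x (4 * dist x x')))" for \<delta> x x'
  have aeQ: "AE x in M. AE x' in M. Q \<delta> x x' \<and> Q \<delta> x' x" if \<delta>: "\<delta> \<in> {0<..<1}" for \<delta>
  proof -
    have h: "AE z in M \<Otimes>\<^sub>M M. Q \<delta> (fst z) (snd z)" using assms(7) \<delta> unfolding Q_def by auto
    have eq: "distr (M \<Otimes>\<^sub>M M) (M \<Otimes>\<^sub>M M) (\<lambda>(x, y). (y, x)) = M \<Otimes>\<^sub>M M"
      using pair_sigma_finite.distr_pair_swap[OF PS] by simp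
    have "AE z in distr (M \<Otimes>\<^sub>M M) (M \<Otimes>\<^sub>M M) (\<lambda>(x, y). (y, x)). Q \<delta> (fst z) (snd z)"
      unfolding eq by (rule h)
    from AE_distrD[OF measurable_pair_swap' this]
    have h2: "AE z in M \<Otimes>\<^sub>M M. Q \<delta> (snd z) (fst z)" by (simp add: split_beta)
    have "AE z in M \<Otimes>\<^sub>M M. Q \<delta> (fst z) (snd z) \<and> Q \<delta> (snd z) (fst z)"
      using h h2 by eventually_elim auto
    from pair_sigma_finite.AE_pair[OF PS this] show ?thesis by simp
  qed
  define H where "H \<delta> s = (\<integral>\<^sup>+ t\<in>{s<..}. \<rho>p \<delta> t / ennreal (t powr (p + 1)) \<partial>lebesgue)" for \<delta> s
  define K where "K = ennreal (2 powr (p+2))"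
  define F where "F r \<delta> = ess_sup_on M \<Omega> (\<lambda>x. \<integral>\<^sup>+ x'. indicator (\<Omega> \<inter> {x'. dist x x' > r}) x' *
            ((\<rho> \<delta> x x' + \<rho> \<delta> x' x) / ennreal (dist x x' powr p)) \<partial>(completion M))" for r \<delta>
  have bound: "F r \<delta> \<le> K * H \<delta> (r/2)" if \<delta>: "\<delta> \<in> {0<..<1}" and r: "r > 0" for r \<delta>
  proof -
    obtain k :: int where k: "r/2 < 2 powr k * rb" "2 powr k * rb \<le> r" using dyadic_scale[OF r rb] by blast
    define R0 where "R0 = 2 powr k * rb"
    have R0: "R0 > 0" unfolding R0_def by (rule mult_pos_pos[OF _ rb]) simp
    have const: "\<rho>p \<delta> t = \<rho>p \<delta> (R0 * 2 ^ Suc n)" if t: "t \<in> {R0 * 2 ^ n <.. R0 * 2 ^ Suc n}" for n t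
    proof -
      obtain c where c: "\<forall>t\<in>{2 powr real_of_int (k + int n) * rb <.. 2 powr (real_of_int (k + int n) + 1) * rb}. \<rho>p \<delta> t = c"
        using spec[OF bspec[OF cst \<delta>], of "k + int n"] by (elim exE) (rule that)
      have e1: "2 powr real_of_int (k + int n) * rb = R0 * 2 ^ n"
        unfolding R0_def by (rule pow_shift)
      have eqS: "real_of_int (k + int n) + 1 = real_of_int (k + int (Suc n))" by simp
      have e2: "2 powr (real_of_int (k + int n) + 1) * rb = R0 * 2 ^ Suc n"
        unfolding R0_def eqS by (rule pow_shift)
      have "R0 * 2 ^ n < R0 * 2 ^ Suc n" using R0 by simp
      then show ?thesis using c t unfolding e1 e2 by auto
    qed
    have "AE x in M. x \<in> \<Omega> \<longrightarrow> (\<integral>\<^sup>+ x'. indicator (\<Omega> \<inter> {x'. dist x x' > r}) x' *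
            ((\<rho> \<delta> x x' + \<rho> \<delta> x' x) / ennreal (dist x x' powr p)) \<partial>(completion M)) \<le> K * H \<delta> (r/2)"
      using aeQ[OF \<delta>]
    proof eventually_elim
      case (elim x)
      show ?case
      proof
        assume x: "x \<in> \<Omega>"
        have ae: "AE x' in M. (x' \<in> \<Omega> \<and> x \<noteq> x' \<longrightarrow> \<rho> \<delta> x x' \<le> \<rho>p \<delta> (dist x x') / emeasure M (cball x (4 * dist x x')))
                    \<and> (x' \<in> \<Omega> \<and> x' \<noteq> x \<longrightarrow> \<rho> \<delta> x' x \<le> \<rho>p \<delta> (dist x' x) / emeasure M (cball x' (4 * dist x' x)))"
          using elim by eventually_elim (use x in \<open>auto simp: Q_def\<close>)
        show "(\<integral>\<^sup>+ x'. indicator (\<Omega> \<inter> {x'. dist x x' > r}) x' *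
            ((\<rho> \<delta> x x' + \<rho> \<delta> x' x) / ennreal (dist x x' powr p)) \<partial>(completion M)) \<le> K * H \<delta> (r/2)"
          unfolding K_def H_def
          by (rule core_bound[OF sM R0 _ _ _ const ae]) (use k assms(3) in \<open>auto simp: R0_def\<close>)
      qed
    qed
    then show ?thesis unfolding F_def ess_sup_on_def by (intro Inf_lower) simp
  qed
  have Kfin: "K < top" unfolding K_def by simp
  have L: "Limsup (at_right 0) (F r) \<le> K * Limsup (at_right 0) (\<lambda>\<delta>. H \<delta> (r/2))" if r: "r > 0" for r
  proof -
    have ev: "eventually (\<lambda>\<delta>. \<delta> \<in> {0<..<1}) (at_right (0::real))"
      unfolding eventually_at_right_field by (intro exI[of _ 1]) auto
    have "Limsup (at_right 0) (F r) \<le> Limsup (at_right 0) (\<lambda>\<delta>. K * H \<delta> (r/2))"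
      by (rule Limsup_mono) (use ev in \<open>eventually_elim, use bound r in auto\<close>)
    also have "\<dots> = K * Limsup (at_right 0) (\<lambda>\<delta>. H \<delta> (r/2))"
      by (rule Limsup_compose_continuous_mono[where f="\<lambda>y. K * y"])
         (auto intro!: ennreal_continuous_on_cmult continuous_on_id Kfin simp: mono_def mult_left_mono)
    finally show ?thesis .
  qed
  have G: "((\<lambda>r. Limsup (at_right 0) (\<lambda>\<delta>. H \<delta> r)) \<longlongrightarrow> 0) (at_right 0)"
    using assms(6) unfolding H_def .
  have half: "filterlim (\<lambda>r::real. r / 2) (at_right 0) (at_right 0)"
  proof (rule tendsto_imp_filterlim_at_right)
    show "((\<lambda>r::real. r / 2) \<longlongrightarrow> 0) (at_right 0)"
      using tendsto_divide[OF tendsto_ident_at[of 0 "{0<..}"] tendsto_const[of 2]] by simp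
    show "\<forall>\<^sub>F x in at_right 0. 0 < x / (2::real)"
      unfolding eventually_at_right_field by (intro exI[of _ 1]) auto
  qed
  have G2: "((\<lambda>r. K * Limsup (at_right 0) (\<lambda>\<delta>. H \<delta> (r/2))) \<longlongrightarrow> 0) (at_right 0)"
  proof -
    have "((\<lambda>r. Limsup (at_right 0) (\<lambda>\<delta>. H \<delta> (r/2))) \<longlongrightarrow> 0) (at_right 0)"
      using filterlim_compose[OF G half] by simp
    from tendsto_mult_ennreal[OF tendsto_const[of K] this] Kfin show ?thesis by simp
  qed
  have "((\<lambda>r. Limsup (at_right 0) (F r)) \<longlongrightarrow> 0) (at_right 0)"
  proof (rule tendsto_sandwich[OF _ _ tendsto_const G2])
    show "\<forall>\<^sub>F r in at_right 0. 0 \<le> Limsup (at_right 0) (F r)" by simp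
    show "\<forall>\<^sub>F r in at_right 0. Limsup (at_right 0) (F r) \<le> K * Limsup (at_right 0) (\<lambda>\<delta>. H \<delta> (r/2))"
      unfolding eventually_at_right_field by (intro exI[of _ 1]) (auto intro: L)
  qed
  then show ?thesis unfolding p_decay_def F_def .
qed

end
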